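(* Let $\mathcal H=L^2[0,1]$ with norm $\|\cdot\|_2$. Let $g_0:\mathcal H\to\mathcal H$ be the integral operator $g_0(x)(\tau)=\int_0^1 c_g(\tau,s)x(s)\,ds$ with a measurable kernel $c_g:[0,1]^2\to\mathbb R$ satisfying $\int_0^1\int_0^1 c_g(\tau,s)^2\,d\tau\,ds<\infty$ and $\sup_{\tau\in[0,1]}\int_0^1 c_g(\tau,s)^2\,ds<\infty$. For each $n\in\mathbb N$ let $\widetilde c_g=\widetilde c_{g,n}$ be a random measurable kernel on $[0,1]^2$ (an estimator of $c_g$) and let $\widetilde g=\widetilde g_n$ be the corresponding random integral operator $\widetilde g(x)(\tau)=\int_0^1\widetilde c_g(\tau,s)x(s)\,ds$. Suppose there is a constant $C>0$ such that $\|\widetilde g\|_{HS}^2\le C$ almost surely for all $n$, and that, as $n\to\infty$, (i) $E\|\widetilde g-g_0\|_{HS}^2\to 0$, and (ii) $\sup_{\tau\in[0,1]}E\int_0^1\big(\widetilde c_g(\tau,s)-c_g(\tau,s)\big)^2ds\to 0$. Then for every $h\in\mathbb N$ and every $x\in\mathcal H$, $$\sup_{\tau\in[0,1]}E\big|\widetilde g_{(h)}(x)(\tau)-g_{0,(h)}(x)(\tau)\big|^2\to 0\quad (n\to\infty),$$ where $g_{0,(h)}=g_0^h$ and $\widetilde g_{(h)}=\widetilde g^{\,h}$ denote the $h$-fold compositions.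
   Context: $\|T\|_{HS}$ denotes the Hilbert–Schmidt norm of an operator $T$ on $L^2[0,1]$; for an integral operator with kernel $c$ it equals $\big(\int_0^1\int_0^1 c(\tau,s)^2d\tau\,ds\big)^{1/2}$. The $h$-fold composition $g_0^h$ is the integral operator with kernel $c_{g,h}$ defined recursively by $c_{g,1}=c_g$ and $c_{g,h}(\tau,s)=\int_0^1 c_{g,h-1}(\tau,u)c_g(u,s)\,du$; analogously $\widetilde g^{\,h}$ has kernel $\widetilde c_{g,h}$ with $\widetilde c_{g,1}=\widetilde c_g$. Pointwise values $g_{0,(h)}(x)(\tau)$, $\widetilde g_{(h)}(x)(\tau)$ are those given by these kernel integrals. Expectations are over the randomness of the estimator. *)

theory Defs
  imports "HOL-Probability.Probability"
begin

definition kop :: "(real \<Rightarrow> real \<Rightarrow> real) \<Rightarrow> (real \<Rightarrow> real) \<Rightarrow> real \<Rightarrow> real" where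
  "kop c x \<tau> = (LINT s:{0..1}|lborel. c \<tau> s * x s)"

text \<open>Kernel of the h-fold composition: kpow c 1 = c,
  kpow c (h+1) tau s = \<integral>_0^1 kpow c h tau u * c u s du.  (kpow c 0 = c is a dummy value;
  the statement only uses h >= 1.)\<close>
fun kpow :: "(real \<Rightarrow> real \<Rightarrow> real) \<Rightarrow> nat \<Rightarrow> real \<Rightarrow> real \<Rightarrow> real" where
  "kpow c 0 = c"
| "kpow c (Suc 0) = c"
| "kpow c (Suc (Suc h)) = (\<lambda>\<tau> s. LINT u:{0..1}|lborel. kpow c (Suc h) \<tau> u * c u s)"

definition hs2 :: "(real \<Rightarrow> real \<Rightarrow> real) \<Rightarrow> ennreal" where
  "hs2 c = (\<integral>\<^sup>+ p \<in> {0..1} \<times> {0..1}. ennreal ((c (fst p) (snd p))\<^sup>2) \<partial>(lborel \<Otimes>\<^sub>M lborel))"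

end

theory Submission
  imports Defs
begin

definition N2 :: "(real \<Rightarrow> real) \<Rightarrow> ennreal" where
  "N2 f = (\<integral>\<^sup>+ s \<in> {0..1}. ennreal ((f s)\<^sup>2) \<partial>lborel)"

lemma CS_set:
  fixes f g :: "real \<Rightarrow> real"
  assumes [measurable]: "f \<in> borel_measurable lborel" "g \<in> borel_measurable lborel"
    and fin: "N2 f \<noteq> \<infinity>" "N2 g \<noteq> \<infinity>"
  shows "set_integrable lborel {0..1} (\<lambda>s. f s * g s) \<and>
         ennreal ((LINT s:{0..1}|lborel. f s * g s)\<^sup>2) \<le> N2 f * N2 g"
proof -
  define F where "F s = ennreal (indicator {0..1::real} s * \<bar>f s\<bar>)" for s
  define G where "G s = ennreal (indicator {0..1::real} s * \<bar>g s\<bar>)" for s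
  have [measurable]: "F \<in> borel_measurable lborel" "G \<in> borel_measurable lborel"
    unfolding F_def G_def by measurable
  have FG: "ennreal (norm (indicator {0..1} s *\<^sub>R (f s * g s))) = F s * G s" for s
    unfolding F_def G_def
    by (auto simp: indicator_def abs_mult ennreal_mult[symmetric])
  have F2: "N2 f = (\<integral>\<^sup>+ s. F s ^ 2 \<partial>lborel)"
    unfolding N2_def F_def
    by (intro nn_integral_cong) (auto simp: indicator_def ennreal_power power2_abs)
  have G2: "N2 g = (\<integral>\<^sup>+ s. G s ^ 2 \<partial>lborel)"
    unfolding N2_def G_def
    by (intro nn_integral_cong) (auto simp: indicator_def ennreal_power power2_abs)
  have cs: "(\<integral>\<^sup>+ s. F s * G s \<partial>lborel)\<^sup>2 \<le> N2 f * N2 g"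
    unfolding F2 G2 by (rule Cauchy_Schwarz_nn_integral) auto
  have "(\<integral>\<^sup>+ s. F s * G s \<partial>lborel)\<^sup>2 < \<infinity>"
    using cs fin by (simp add: ennreal_mult_less_top less_top order.strict_trans1)
  then have fin2: "(\<integral>\<^sup>+ s. F s * G s \<partial>lborel) < \<infinity>"
    by (simp add: power_less_top_ennreal)
  have int: "set_integrable lborel {0..1} (\<lambda>s. f s * g s)"
    unfolding set_integrable_def
    by (rule integrableI_bounded) (use fin2 FG in auto)
  have "ennreal (\<integral>s. norm (indicator {0..1} s *\<^sub>R (f s * g s)) \<partial>lborel)
        = (\<integral>\<^sup>+ s. ennreal (norm (indicator {0..1} s *\<^sub>R (f s * g s))) \<partial>lborel)"
    using int unfolding set_integrable_def
    by (intro nn_integral_eq_integral[symmetric]) auto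
  also have "\<dots> = (\<integral>\<^sup>+ s. F s * G s \<partial>lborel)" using FG by simp
  finally have eq: "ennreal (\<integral>s. norm (indicator {0..1} s *\<^sub>R (f s * g s)) \<partial>lborel) = (\<integral>\<^sup>+ s. F s * G s \<partial>lborel)" .
  have le: "\<bar>LINT s:{0..1}|lborel. f s * g s\<bar> \<le> (\<integral>s. norm (indicator {0..1} s *\<^sub>R (f s * g s)) \<partial>lborel)"
    unfolding set_lebesgue_integral_def using integral_norm_bound by (metis real_norm_def)
  have "ennreal ((LINT s:{0..1}|lborel. f s * g s)\<^sup>2) \<le> ennreal ((\<integral>s. norm (indicator {0..1} s *\<^sub>R (f s * g s)) \<partial>lborel)\<^sup>2)"
    using le by (intro ennreal_leI) (metis abs_ge_zero power2_abs power_mono)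
  also have "\<dots> = (\<integral>\<^sup>+ s. F s * G s \<partial>lborel)\<^sup>2"
    by (simp add: eq[symmetric] ennreal_power)
  finally show ?thesis using int cs by auto
qed


lemma kpow_meas:
  assumes [measurable]: "(\<lambda>(\<tau>, s). c \<tau> s) \<in> borel_measurable (lborel \<Otimes>\<^sub>M lborel)"
  shows "(\<lambda>(\<tau>, s). kpow c (Suc k) \<tau> s) \<in> borel_measurable (lborel \<Otimes>\<^sub>M lborel)"
proof (induction k)
  case 0 then show ?case by simp
next
  case (Suc k)
  note [measurable] = Suc.IH
  show ?case
    unfolding kpow.simps set_lebesgue_integral_def split_beta'
    by measurable
qed


definition colsq :: "(real \<Rightarrow> real \<Rightarrow> real) \<Rightarrow> real \<Rightarrow> ennreal" where
  "colsq K s = N2 (\<lambda>u. K u s)"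

lemma colsq_meas[measurable]:
  assumes [measurable]: "(\<lambda>(\<tau>, s). K \<tau> s) \<in> borel_measurable (lborel \<Otimes>\<^sub>M lborel)"
  shows "colsq K \<in> borel_measurable lborel"
proof -
  have [measurable]: "(\<lambda>(s, u). K u s) \<in> borel_measurable (lborel \<Otimes>\<^sub>M lborel)"
    using measurable_pair_swap[OF assms] by (simp add: split_beta')
  show ?thesis unfolding colsq_def N2_def by measurable
qed

lemma hs2_col:
  assumes [measurable]: "(\<lambda>(\<tau>, s). K \<tau> s) \<in> borel_measurable (lborel \<Otimes>\<^sub>M lborel)"
  shows "(\<integral>\<^sup>+ s\<in>{0..1}. colsq K s \<partial>lborel) = hs2 K"
proof -
  have "(\<integral>\<^sup>+ s\<in>{0..1}. colsq K s \<partial>lborel) =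
     (\<integral>\<^sup>+ s. (\<integral>\<^sup>+ u. ennreal ((K (fst (u,s)) (snd (u,s)))\<^sup>2) * indicator ({0..1} \<times> {0..1}) (u,s) \<partial>lborel) \<partial>lborel)"
    unfolding colsq_def N2_def
    by (intro nn_integral_cong) (auto simp: indicator_def nn_integral_cmult_indicator split: split_indicator
        intro: nn_integral_cong)
  also have "\<dots> = hs2 K"
    unfolding hs2_def
    by (rule lborel_pair.nn_integral_snd) (simp add: split_beta')
  finally show ?thesis .
qed


lemma sq_sum_le: "ennreal ((x + y)\<^sup>2) \<le> 2 * ennreal (x\<^sup>2) + 2 * ennreal ((y::real)\<^sup>2)"
proof -
  have e: "(x + y)\<^sup>2 + (x - y)\<^sup>2 = 2 * x\<^sup>2 + 2 * y\<^sup>2" by (simp add: power2_sum power2_diff)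
  have "0 \<le> (x - y)\<^sup>2" by simp
  then have "(x + y)\<^sup>2 \<le> 2 * x\<^sup>2 + 2 * y\<^sup>2" using e by linarith
  then have "ennreal ((x + y)\<^sup>2) \<le> ennreal (2 * x\<^sup>2 + 2 * y\<^sup>2)" by (rule ennreal_leI)
  also have "\<dots> = ennreal (2 * x\<^sup>2) + ennreal (2 * y\<^sup>2)" by (rule ennreal_plus) auto
  also have "\<dots> = 2 * ennreal (x\<^sup>2) + 2 * ennreal (y\<^sup>2)" by (simp add: ennreal_mult)
  finally show ?thesis .
qed

lemma step:
  fixes A B :: "real \<Rightarrow> real \<Rightarrow> real" and a b :: "real \<Rightarrow> real"
  assumes Am[measurable]: "(\<lambda>(\<tau>, s). A \<tau> s) \<in> borel_measurable (lborel \<Otimes>\<^sub>M lborel)"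
    and Bm[measurable]: "(\<lambda>(\<tau>, s). B \<tau> s) \<in> borel_measurable (lborel \<Otimes>\<^sub>M lborel)"
    and hsA: "hs2 A \<le> ennreal C" and Cpos: "C > 0"
    and am[measurable]: "a \<in> borel_measurable lborel" and bm[measurable]: "b \<in> borel_measurable lborel"
    and Nb: "N2 b \<le> ennreal Kb" and Kbpos: "Kb > 0"
  shows "N2 (\<lambda>s. (LINT u:{0..1}|lborel. a u * A u s) - (LINT u:{0..1}|lborel. b u * B u s))
         \<le> 2 * N2 (\<lambda>u. a u - b u) * ennreal C + 2 * ennreal Kb * hs2 (\<lambda>u s. A u s - B u s)"
proof (cases "N2 (\<lambda>u. a u - b u) = \<infinity> \<or> hs2 (\<lambda>u s. A u s - B u s) = \<infinity>")
  case True
  then show ?thesis using Cpos Kbpos by (auto simp: ennreal_mult_eq_top_iff)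
next
  case False
  define D where "D u s = A u s - B u s" for u s
  have Dm[measurable]: "(\<lambda>(\<tau>, s). D \<tau> s) \<in> borel_measurable (lborel \<Otimes>\<^sub>M lborel)"
    unfolding D_def using Am Bm by (simp add: split_beta')
  define R where "R = N2 (\<lambda>u. a u - b u)"
  define H where "H = hs2 D"
  have Rfin: "R \<noteq> \<infinity>" and Hfin: "H \<noteq> \<infinity>" using False unfolding R_def H_def D_def by auto
  have Nbfin: "N2 b \<noteq> \<infinity>" using Nb by (auto simp: top_unique)
  have AEA: "AE s in lborel. colsq A s * indicator {0..1} s \<noteq> \<infinity>"
    using hsA hs2_col[OF Am] by (intro nn_integral_PInf_AE) (auto simp: top_unique)
  have AED: "AE s in lborel. colsq D s * indicator {0..1} s \<noteq> \<infinity>"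
    using Hfin hs2_col[OF Dm] unfolding H_def by (intro nn_integral_PInf_AE) auto
  have pt: "ennreal (((LINT u:{0..1}|lborel. a u * A u s) - (LINT u:{0..1}|lborel. b u * B u s))\<^sup>2) * indicator {0..1} s
      \<le> (2 * R * colsq A s + 2 * ennreal Kb * colsq D s) * indicator {0..1} s"
    if s1: "colsq A s * indicator {0..1} s \<noteq> \<infinity>" and s2: "colsq D s * indicator {0..1} s \<noteq> \<infinity>" for s
  proof (cases "s \<in> {0..1}")
    case False then show ?thesis by simp
  next
    case True
    have cA: "N2 (\<lambda>u. A u s) \<noteq> \<infinity>" and cD: "N2 (\<lambda>u. D u s) \<noteq> \<infinity>"
      using s1 s2 True by (auto simp: colsq_def)
    have [measurable]: "(\<lambda>u. A u s) \<in> borel_measurable lborel" "(\<lambda>u. D u s) \<in> borel_measurable lborel"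
      by measurable
    have 1: "set_integrable lborel {0..1} (\<lambda>u. (a u - b u) * A u s) \<and>
        ennreal ((LINT u:{0..1}|lborel. (a u - b u) * A u s)\<^sup>2) \<le> R * colsq A s"
      unfolding R_def colsq_def by (rule CS_set) (use Rfin cA in \<open>auto simp: R_def\<close>)
    have 2: "set_integrable lborel {0..1} (\<lambda>u. b u * A u s)"
      using CS_set[of b "\<lambda>u. A u s"] Nbfin cA by auto
    have 3: "set_integrable lborel {0..1} (\<lambda>u. b u * D u s) \<and>
        ennreal ((LINT u:{0..1}|lborel. b u * D u s)\<^sup>2) \<le> N2 b * colsq D s"
      unfolding colsq_def by (rule CS_set) (use Nbfin cD in auto)
    have e1: "(LINT u:{0..1}|lborel. a u * A u s) = (LINT u:{0..1}|lborel. (a u - b u) * A u s) + (LINT u:{0..1}|lborel. b u * A u s)"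
      using 1 2 by (subst set_integral_add(2)[symmetric]) (auto simp: algebra_simps)
    have e2: "(LINT u:{0..1}|lborel. b u * B u s) = (LINT u:{0..1}|lborel. b u * A u s) - (LINT u:{0..1}|lborel. b u * D u s)"
      using 2 3 by (subst set_integral_diff(2)[symmetric]) (auto simp: algebra_simps D_def)
    have "ennreal (((LINT u:{0..1}|lborel. a u * A u s) - (LINT u:{0..1}|lborel. b u * B u s))\<^sup>2)
        = ennreal (((LINT u:{0..1}|lborel. (a u - b u) * A u s) + (LINT u:{0..1}|lborel. b u * D u s))\<^sup>2)"
      unfolding e1 e2 by (simp add: algebra_simps)
    also have "\<dots> \<le> 2 * ennreal ((LINT u:{0..1}|lborel. (a u - b u) * A u s)\<^sup>2) + 2 * ennreal ((LINT u:{0..1}|lborel. b u * D u s)\<^sup>2)"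
      by (rule sq_sum_le)
    also have "\<dots> \<le> 2 * (R * colsq A s) + 2 * (ennreal Kb * colsq D s)"
    proof -
      have "N2 b * colsq D s \<le> ennreal Kb * colsq D s" using Nb by (rule mult_right_mono) simp
      then show ?thesis using 1 3 by (intro add_mono mult_left_mono) (auto intro: order_trans)
    qed
    finally show ?thesis using True by (simp add: mult.assoc)
  qed
  have "N2 (\<lambda>s. (LINT u:{0..1}|lborel. a u * A u s) - (LINT u:{0..1}|lborel. b u * B u s))
      \<le> (\<integral>\<^sup>+ s. (2 * R * colsq A s + 2 * ennreal Kb * colsq D s) * indicator {0..1} s \<partial>lborel)"
    unfolding N2_def
  proof (rule nn_integral_mono_AE)
    from AEA AED show "AE s in lborel. ennreal (((LINT u:{0..1}|lborel. a u * A u s) - (LINT u:{0..1}|lborel. b u * B u s))\<^sup>2) * indicator {0..1} s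
      \<le> (2 * R * colsq A s + 2 * ennreal Kb * colsq D s) * indicator {0..1} s"
      by eventually_elim (rule pt)
  qed
  also have "\<dots> = (\<integral>\<^sup>+ s. 2 * R * (colsq A s * indicator {0..1} s) + 2 * ennreal Kb * (colsq D s * indicator {0..1} s) \<partial>lborel)"
    by (intro nn_integral_cong) (simp add: algebra_simps)
  also have "\<dots> = 2 * R * (\<integral>\<^sup>+ s\<in>{0..1}. colsq A s \<partial>lborel) + 2 * ennreal Kb * (\<integral>\<^sup>+ s\<in>{0..1}. colsq D s \<partial>lborel)"
    by (subst nn_integral_add) (auto simp: nn_integral_cmult)
  also have "\<dots> = 2 * R * hs2 A + 2 * ennreal Kb * H"
    unfolding H_def hs2_col[OF Am] hs2_col[OF Dm] ..
  also have "\<dots> \<le> 2 * R * ennreal C + 2 * ennreal Kb * H"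
    using hsA by (intro add_mono mult_left_mono) auto
  finally show ?thesis unfolding R_def H_def D_def .
qed


lemma row_bound:
  fixes B :: "real \<Rightarrow> real \<Rightarrow> real"
  assumes Bm[measurable]: "(\<lambda>(\<tau>, s). B \<tau> s) \<in> borel_measurable (lborel \<Otimes>\<^sub>M lborel)"
    and hsB: "hs2 B < \<infinity>"
    and rows: "(SUP \<tau>\<in>{0..1}. \<integral>\<^sup>+ s \<in> {0..1}. ennreal ((B \<tau> s)\<^sup>2) \<partial>lborel) < \<infinity>"
  shows "\<exists>K>0. \<forall>\<tau>\<in>{0..1}. N2 (kpow B (Suc k) \<tau>) \<le> ennreal K"
proof (induction k)
  case 0
  define S where "S = (SUP \<tau>\<in>{0..1}. \<integral>\<^sup>+ s \<in> {0..1}. ennreal ((B \<tau> s)\<^sup>2) \<partial>lborel)"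
  have "\<forall>\<tau>\<in>{0..1}. N2 (kpow B (Suc 0) \<tau>) \<le> ennreal (enn2real S + 1)"
  proof
    fix \<tau> :: real assume t: "\<tau> \<in> {0..1}"
    have "N2 (kpow B (Suc 0) \<tau>) \<le> S" unfolding S_def N2_def using t by (auto intro: SUP_upper)
    also have "\<dots> = ennreal (enn2real S)" using rows unfolding S_def by (simp add: less_top)
    also have "\<dots> \<le> ennreal (enn2real S + 1)" by (intro ennreal_leI) auto
    finally show "N2 (kpow B (Suc 0) \<tau>) \<le> ennreal (enn2real S + 1)" .
  qed
  moreover have "enn2real S + 1 > 0" by (simp add: add_nonneg_pos)
  ultimately show ?case by blast
next
  case (Suc k)
  then obtain K where K: "K > 0" "\<forall>\<tau>\<in>{0..1}. N2 (kpow B (Suc k) \<tau>) \<le> ennreal K" by blast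
  have [measurable]: "(\<lambda>(\<tau>, s). kpow B (Suc k) \<tau> s) \<in> borel_measurable (lborel \<Otimes>\<^sub>M lborel)"
    by (rule kpow_meas) simp
  define K' where "K' = 2 * K + 2 * K * enn2real (hs2 B)"
  have "\<forall>\<tau>\<in>{0..1}. N2 (kpow B (Suc (Suc k)) \<tau>) \<le> ennreal K'"
  proof
    fix \<tau> :: real assume t: "\<tau> \<in> {0..1}"
    have [measurable]: "kpow B (Suc k) \<tau> \<in> borel_measurable lborel" by measurable
    have st: "N2 (\<lambda>s. (LINT u:{0..1}|lborel. (\<lambda>_::real. 0::real) u * (\<lambda>_::real. \<lambda>_::real. 0::real) u s) - (LINT u:{0..1}|lborel. kpow B (Suc k) \<tau> u * B u s))
         \<le> 2 * N2 (\<lambda>u. (\<lambda>_. 0) u - kpow B (Suc k) \<tau> u) * ennreal 1 + 2 * ennreal K * hs2 (\<lambda>u s. (\<lambda>_ _. 0) u s - B u s)"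
      by (rule step[of "\<lambda>_ _. 0" B 1 "\<lambda>_. 0" "kpow B (Suc k) \<tau>" K]) (use K t in \<open>auto simp: hs2_def\<close>)
    have e1: "N2 (\<lambda>s. (LINT u:{0..1}|lborel. (\<lambda>_::real. 0::real) u * (\<lambda>_::real. \<lambda>_::real. 0::real) u s) - (LINT u:{0..1}|lborel. kpow B (Suc k) \<tau> u * B u s))
        = N2 (kpow B (Suc (Suc k)) \<tau>)" by (simp add: N2_def)
    have e2: "N2 (\<lambda>u. (\<lambda>_. 0) u - kpow B (Suc k) \<tau> u) = N2 (kpow B (Suc k) \<tau>)" by (simp add: N2_def)
    have e3: "hs2 (\<lambda>u s. (\<lambda>_ _. 0) u s - B u s) = ennreal (enn2real (hs2 B))"
      using hsB by (simp add: hs2_def less_top)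
    have "N2 (kpow B (Suc (Suc k)) \<tau>) \<le> 2 * ennreal K * ennreal 1 + 2 * ennreal K * ennreal (enn2real (hs2 B))"
      using st K t unfolding e1 e2 e3 by (auto intro!: add_mono mult_right_mono mult_left_mono intro: order_trans)
    also have "\<dots> = ennreal K'"
    proof -
      have "ennreal K' = ennreal (2 * K) + ennreal (2 * K * enn2real (hs2 B))"
        unfolding K'_def by (rule ennreal_plus) (use K in auto)
      also have "\<dots> = 2 * ennreal K * ennreal 1 + 2 * ennreal K * ennreal (enn2real (hs2 B))"
        using K by (simp add: ennreal_mult)
      finally show ?thesis by simp
    qed
    finally show "N2 (kpow B (Suc (Suc k)) \<tau>) \<le> ennreal K'" .
  qed
  moreover have "K' > 0" unfolding K'_def using K by (simp add: add_pos_nonneg)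
  ultimately show ?case by blast
qed


lemma kop_bound:
  fixes a b x :: "real \<Rightarrow> real"
  assumes [measurable]: "a \<in> borel_measurable lborel" "b \<in> borel_measurable lborel" "x \<in> borel_measurable lborel"
    and fb: "N2 b \<noteq> \<infinity>" and fx: "N2 x \<noteq> \<infinity>"
  shows "ennreal (((LINT s:{0..1}|lborel. a s * x s) - (LINT s:{0..1}|lborel. b s * x s))\<^sup>2)
         \<le> N2 (\<lambda>s. a s - b s) * (N2 x + 1)"
proof (cases "N2 (\<lambda>s. a s - b s) = \<infinity>")
  case True then show ?thesis by (simp add: ennreal_mult_eq_top_iff)
next
  case False
  have 1: "set_integrable lborel {0..1} (\<lambda>s. (a s - b s) * x s) \<and>
      ennreal ((LINT s:{0..1}|lborel. (a s - b s) * x s)\<^sup>2) \<le> N2 (\<lambda>s. a s - b s) * N2 x"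
    by (rule CS_set) (use False fx in auto)
  have 2: "set_integrable lborel {0..1} (\<lambda>s. b s * x s)"
    using CS_set[of b x] fb fx by auto
  have e: "(LINT s:{0..1}|lborel. a s * x s) = (LINT s:{0..1}|lborel. (a s - b s) * x s) + (LINT s:{0..1}|lborel. b s * x s)"
    using 1 2 by (subst set_integral_add(2)[symmetric]) (auto simp: algebra_simps)
  have "ennreal (((LINT s:{0..1}|lborel. a s * x s) - (LINT s:{0..1}|lborel. b s * x s))\<^sup>2)
      \<le> N2 (\<lambda>s. a s - b s) * N2 x" using 1 unfolding e by simp
  also have "\<dots> \<le> N2 (\<lambda>s. a s - b s) * (N2 x + 1)" by (intro mult_left_mono) auto
  finally show ?thesis .
qed

lemma recur:
  fixes B :: "real \<Rightarrow> real \<Rightarrow> real" and C :: real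
  assumes Bm[measurable]: "(\<lambda>(\<tau>, s). B \<tau> s) \<in> borel_measurable (lborel \<Otimes>\<^sub>M lborel)"
    and hsB: "hs2 B < \<infinity>"
    and rows: "(SUP \<tau>\<in>{0..1}. \<integral>\<^sup>+ s \<in> {0..1}. ennreal ((B \<tau> s)\<^sup>2) \<partial>lborel) < \<infinity>"
    and Cpos: "C > 0"
  shows "\<exists>\<alpha> \<beta>. \<alpha> \<ge> 0 \<and> \<beta> \<ge> 0 \<and> (\<forall>A. (\<lambda>(\<tau>, s). A \<tau> s) \<in> borel_measurable (lborel \<Otimes>\<^sub>M lborel) \<longrightarrow>
      hs2 A \<le> ennreal C \<longrightarrow> (\<forall>\<tau>\<in>{0..1}. N2 (\<lambda>s. kpow A (Suc k) \<tau> s - kpow B (Suc k) \<tau> s)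
        \<le> ennreal \<alpha> * N2 (\<lambda>s. A \<tau> s - B \<tau> s) + ennreal \<beta> * hs2 (\<lambda>u s. A u s - B u s)))"
proof (induction k)
  case 0
  show ?case by (rule exI[of _ 1], rule exI[of _ 0]) auto
next
  case (Suc k)
  then obtain \<alpha> \<beta> where ab: "\<alpha> \<ge> 0" "\<beta> \<ge> 0" and IH: "\<And>A \<tau>. (\<lambda>(\<tau>, s). A \<tau> s) \<in> borel_measurable (lborel \<Otimes>\<^sub>M lborel) \<Longrightarrow>
      hs2 A \<le> ennreal C \<Longrightarrow> \<tau> \<in> {0..1} \<Longrightarrow> N2 (\<lambda>s. kpow A (Suc k) \<tau> s - kpow B (Suc k) \<tau> s)
        \<le> ennreal \<alpha> * N2 (\<lambda>s. A \<tau> s - B \<tau> s) + ennreal \<beta> * hs2 (\<lambda>u s. A u s - B u s)"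
    by blast
  obtain K where K: "K > 0" "\<And>\<tau>. \<tau> \<in> {0..1} \<Longrightarrow> N2 (kpow B (Suc k) \<tau>) \<le> ennreal K"
    using row_bound[OF Bm hsB rows, of k] by blast
  have [measurable]: "(\<lambda>(\<tau>, s). kpow B (Suc k) \<tau> s) \<in> borel_measurable (lborel \<Otimes>\<^sub>M lborel)"
    by (rule kpow_meas) simp
  show ?case
  proof (rule exI[of _ "2 * C * \<alpha>"], rule exI[of _ "2 * C * \<beta> + 2 * K"], intro conjI allI impI ballI)
    show "0 \<le> 2 * C * \<alpha>" "0 \<le> 2 * C * \<beta> + 2 * K" using ab Cpos K by auto
    fix A :: "real \<Rightarrow> real \<Rightarrow> real" and \<tau> :: real
    assume Am[measurable]: "(\<lambda>(\<tau>, s). A \<tau> s) \<in> borel_measurable (lborel \<Otimes>\<^sub>M lborel)"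
      and hA: "hs2 A \<le> ennreal C" and t: "\<tau> \<in> {0..1}"
    have [measurable]: "(\<lambda>(\<tau>, s). kpow A (Suc k) \<tau> s) \<in> borel_measurable (lborel \<Otimes>\<^sub>M lborel)"
      by (rule kpow_meas) simp
    have [measurable]: "kpow A (Suc k) \<tau> \<in> borel_measurable lborel" "kpow B (Suc k) \<tau> \<in> borel_measurable lborel"
      by measurable
    define R1 where "R1 = N2 (\<lambda>s. A \<tau> s - B \<tau> s)"
    define H where "H = hs2 (\<lambda>u s. A u s - B u s)"
    have "N2 (\<lambda>s. kpow A (Suc (Suc k)) \<tau> s - kpow B (Suc (Suc k)) \<tau> s)
        = N2 (\<lambda>s. (LINT u:{0..1}|lborel. kpow A (Suc k) \<tau> u * A u s) - (LINT u:{0..1}|lborel. kpow B (Suc k) \<tau> u * B u s))"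
      by simp
    also have "\<dots> \<le> 2 * N2 (\<lambda>u. kpow A (Suc k) \<tau> u - kpow B (Suc k) \<tau> u) * ennreal C + 2 * ennreal K * H"
      unfolding H_def by (rule step) (use hA Cpos K t in auto)
    also have "\<dots> \<le> 2 * (ennreal \<alpha> * R1 + ennreal \<beta> * H) * ennreal C + 2 * ennreal K * H"
      using IH[OF Am hA t] unfolding R1_def H_def by (intro add_mono mult_right_mono mult_left_mono) auto
    also have "\<dots> = ennreal (2 * C * \<alpha>) * R1 + ennreal (2 * C * \<beta> + 2 * K) * H"
    proof -
      have "ennreal (2 * C * \<beta> + 2 * K) = ennreal (2 * C * \<beta>) + ennreal (2 * K)"
        by (rule ennreal_plus) (use ab Cpos K in auto)
      then show ?thesis using ab Cpos K by (simp add: ennreal_mult algebra_simps)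
    qed
    finally show "N2 (\<lambda>s. kpow A (Suc (Suc k)) \<tau> s - kpow B (Suc (Suc k)) \<tau> s)
        \<le> ennreal (2 * C * \<alpha>) * N2 (\<lambda>s. A \<tau> s - B \<tau> s) + ennreal (2 * C * \<beta> + 2 * K) * hs2 (\<lambda>u s. A u s - B u s)"
      unfolding R1_def H_def .
  qed
qed


theorem proposition3p1:
  fixes M :: "'a measure"
    and cg :: "real \<Rightarrow> real \<Rightarrow> real"
    and ct :: "nat \<Rightarrow> 'a \<Rightarrow> real \<Rightarrow> real \<Rightarrow> real"
    and C :: real
  assumes "prob_space M"
    and cg_meas: "(\<lambda>(\<tau>, s). cg \<tau> s) \<in> borel_measurable (lborel \<Otimes>\<^sub>M lborel)"
    and cg_hs: "hs2 cg < \<infinity>"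
    and cg_rows: "(SUP \<tau>\<in>{0..1}. \<integral>\<^sup>+ s \<in> {0..1}. ennreal ((cg \<tau> s)\<^sup>2) \<partial>lborel) < \<infinity>"
    and ct_meas: "\<And>n. (\<lambda>(\<omega>, \<tau>, s). ct n \<omega> \<tau> s) \<in> borel_measurable (M \<Otimes>\<^sub>M (lborel \<Otimes>\<^sub>M lborel))"
    and C_pos: "C > 0"
    and ct_bound: "\<And>n. AE \<omega> in M. hs2 (ct n \<omega>) \<le> ennreal C"
    and conv_hs: "(\<lambda>n. \<integral>\<^sup>+ \<omega>. hs2 (\<lambda>\<tau> s. ct n \<omega> \<tau> s - cg \<tau> s) \<partial>M) \<longlonglongrightarrow> 0"
    and conv_rows: "(\<lambda>n. SUP \<tau>\<in>{0..1}. \<integral>\<^sup>+ \<omega>. (\<integral>\<^sup>+ s \<in> {0..1}.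
                        ennreal ((ct n \<omega> \<tau> s - cg \<tau> s)\<^sup>2) \<partial>lborel) \<partial>M) \<longlonglongrightarrow> 0"
  shows "\<forall>h \<ge> 1. \<forall>x :: real \<Rightarrow> real.
           x \<in> borel_measurable lborel \<and> set_integrable lborel {0..1} (\<lambda>s. (x s)\<^sup>2) \<longrightarrow>
           (\<lambda>n. SUP \<tau>\<in>{0..1}. \<integral>\<^sup>+ \<omega>.
              ennreal ((kop (kpow (ct n \<omega>) h) x \<tau> - kop (kpow cg h) x \<tau>)\<^sup>2) \<partial>M) \<longlonglongrightarrow> 0"
proof (intro allI impI, elim conjE)
  fix h :: nat and x :: "real \<Rightarrow> real"
  assume h1: "h \<ge> 1" and xm[measurable]: "x \<in> borel_measurable lborel"
    and xi: "set_integrable lborel {0..1} (\<lambda>s. (x s)\<^sup>2)"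
  interpret prob_space M by fact
  note cg_meas[measurable]
  have ctb: "(\<lambda>(\<omega>, \<tau>, s). ct n \<omega> \<tau> s) \<in> borel_measurable (M \<Otimes>\<^sub>M (borel \<Otimes>\<^sub>M borel))" for n
  proof -
    have "sets (M \<Otimes>\<^sub>M (lborel \<Otimes>\<^sub>M lborel)) = sets (M \<Otimes>\<^sub>M (borel \<Otimes>\<^sub>M borel))"
      by (intro sets_pair_measure_cong) auto
    then have eq: "borel_measurable (M \<Otimes>\<^sub>M (lborel \<Otimes>\<^sub>M lborel)) = borel_measurable (M \<Otimes>\<^sub>M (borel \<Otimes>\<^sub>M borel))"
      by (rule measurable_cong_sets) (rule refl)
    show ?thesis using ct_meas[of n] unfolding eq .
  qed
  have ct3[measurable]: "(\<lambda>z. ct n (f z) (g z) (k z)) \<in> borel_measurable N"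
    if [measurable]: "f \<in> measurable N M" "g \<in> borel_measurable N" "k \<in> borel_measurable N" for n f g k and N :: "'b measure"
    using measurable_compose[OF measurable_Pair[OF that(1) measurable_Pair[OF that(2) that(3)]] ctb[of n]]
    by (simp add: split_beta')
  obtain k where hk: "h = Suc k" using h1 by (cases h) auto
  obtain \<alpha> \<beta> where ab: "\<alpha> \<ge> 0" "\<beta> \<ge> 0" and rec: "\<And>A \<tau>. (\<lambda>(\<tau>, s). A \<tau> s) \<in> borel_measurable (lborel \<Otimes>\<^sub>M lborel) \<Longrightarrow>
      hs2 A \<le> ennreal C \<Longrightarrow> \<tau> \<in> {0..1} \<Longrightarrow> N2 (\<lambda>s. kpow A (Suc k) \<tau> s - kpow cg (Suc k) \<tau> s)
        \<le> ennreal \<alpha> * N2 (\<lambda>s. A \<tau> s - cg \<tau> s) + ennreal \<beta> * hs2 (\<lambda>u s. A u s - cg u s)"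
    using recur[OF cg_meas cg_hs cg_rows C_pos, of k] by blast
  obtain K where K: "K > 0" "\<And>\<tau>. \<tau> \<in> {0..1} \<Longrightarrow> N2 (kpow cg (Suc k) \<tau>) \<le> ennreal K"
    using row_bound[OF cg_meas cg_hs cg_rows, of k] by blast
  have Nx: "N2 x \<noteq> \<infinity>"
  proof -
    have "(\<integral>\<^sup>+ s. ennreal (norm (indicator {0..1} s *\<^sub>R (x s)\<^sup>2)) \<partial>lborel) < \<infinity>"
      using xi unfolding set_integrable_def by (simp add: integrable_iff_bounded)
    moreover have "(\<integral>\<^sup>+ s. ennreal (norm (indicator {0..1} s *\<^sub>R (x s)\<^sup>2)) \<partial>lborel) = N2 x"
      unfolding N2_def by (intro nn_integral_cong) (auto simp: indicator_def)
    ultimately show ?thesis by simp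
  qed
  define X where "X = N2 x + 1"
  have Xfin: "X \<noteq> \<infinity>" using Nx unfolding X_def by simp
  define R1 where "R1 n \<omega> \<tau> = N2 (\<lambda>s. ct n \<omega> \<tau> s - cg \<tau> s)" for n \<omega> \<tau>
  define H where "H n \<omega> = hs2 (\<lambda>u s. ct n \<omega> u s - cg u s)" for n \<omega>
  have R1m[measurable]: "(\<lambda>\<omega>. R1 n \<omega> \<tau>) \<in> borel_measurable M" for n \<tau>
    unfolding R1_def N2_def by measurable
  have Hm[measurable]: "H n \<in> borel_measurable M" for n
  proof -
    interpret sf: sigma_finite_measure "lborel \<Otimes>\<^sub>M lborel"
      by (intro sigma_finite_pair_measure) (simp_all add: lborel.sigma_finite_measure_axioms)
    show ?thesis unfolding H_def hs2_def by measurable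
  qed
  have bound: "(\<integral>\<^sup>+ \<omega>. ennreal ((kop (kpow (ct n \<omega>) h) x \<tau> - kop (kpow cg h) x \<tau>)\<^sup>2) \<partial>M)
      \<le> X * (ennreal \<alpha> * (\<integral>\<^sup>+ \<omega>. R1 n \<omega> \<tau> \<partial>M) + ennreal \<beta> * (\<integral>\<^sup>+ \<omega>. H n \<omega> \<partial>M))"
    if t: "\<tau> \<in> {0..1}" for n \<tau>
  proof -
    have "(\<integral>\<^sup>+ \<omega>. ennreal ((kop (kpow (ct n \<omega>) h) x \<tau> - kop (kpow cg h) x \<tau>)\<^sup>2) \<partial>M)
        \<le> (\<integral>\<^sup>+ \<omega>. X * (ennreal \<alpha> * R1 n \<omega> \<tau> + ennreal \<beta> * H n \<omega>) \<partial>M)"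
    proof (rule nn_integral_mono_AE)
      show "AE \<omega> in M. ennreal ((kop (kpow (ct n \<omega>) h) x \<tau> - kop (kpow cg h) x \<tau>)\<^sup>2)
          \<le> X * (ennreal \<alpha> * R1 n \<omega> \<tau> + ennreal \<beta> * H n \<omega>)"
        using ct_bound[of n] AE_space
      proof eventually_elim
        case (elim \<omega>)
        have Am[measurable]: "(\<lambda>(\<tau>, s). ct n \<omega> \<tau> s) \<in> borel_measurable (lborel \<Otimes>\<^sub>M lborel)"
          using elim by measurable
        have [measurable]: "(\<lambda>(\<tau>, s). kpow (ct n \<omega>) (Suc k) \<tau> s) \<in> borel_measurable (lborel \<Otimes>\<^sub>M lborel)"
          "(\<lambda>(\<tau>, s). kpow cg (Suc k) \<tau> s) \<in> borel_measurable (lborel \<Otimes>\<^sub>M lborel)"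
          by (rule kpow_meas; simp)+
        have [measurable]: "kpow (ct n \<omega>) (Suc k) \<tau> \<in> borel_measurable lborel"
          "kpow cg (Suc k) \<tau> \<in> borel_measurable lborel" by measurable
        have fb: "N2 (kpow cg (Suc k) \<tau>) \<noteq> \<infinity>" using K(2)[OF t] by (auto simp: top_unique)
        have "ennreal ((kop (kpow (ct n \<omega>) h) x \<tau> - kop (kpow cg h) x \<tau>)\<^sup>2)
            \<le> N2 (\<lambda>s. kpow (ct n \<omega>) (Suc k) \<tau> s - kpow cg (Suc k) \<tau> s) * X"
          unfolding hk kop_def X_def by (rule kop_bound) (use fb Nx in auto)
        also have "\<dots> \<le> (ennreal \<alpha> * R1 n \<omega> \<tau> + ennreal \<beta> * H n \<omega>) * X"
          unfolding R1_def H_def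
          by (intro mult_right_mono rec[OF Am _ t]) (use elim in auto)
        finally show ?case by (simp add: mult.commute)
      qed
    qed
    also have "\<dots> = X * (ennreal \<alpha> * (\<integral>\<^sup>+ \<omega>. R1 n \<omega> \<tau> \<partial>M) + ennreal \<beta> * (\<integral>\<^sup>+ \<omega>. H n \<omega> \<partial>M))"
      by (simp add: nn_integral_cmult nn_integral_add)
    finally show ?thesis .
  qed
  define S where "S n = (SUP \<tau>\<in>{0..1}. \<integral>\<^sup>+ \<omega>. R1 n \<omega> \<tau> \<partial>M)" for n
  define E where "E n = (\<integral>\<^sup>+ \<omega>. H n \<omega> \<partial>M)" for n
  have S0: "S \<longlonglongrightarrow> 0" using conv_rows unfolding S_def R1_def N2_def .
  have E0: "E \<longlonglongrightarrow> 0" using conv_hs unfolding E_def H_def .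
  have lim: "(\<lambda>n. X * (ennreal \<alpha> * S n + ennreal \<beta> * E n)) \<longlonglongrightarrow> X * (ennreal \<alpha> * 0 + ennreal \<beta> * 0)"
    by (intro tendsto_mult_ennreal tendsto_add tendsto_const S0 E0) (use Xfin in auto)
  show "(\<lambda>n. SUP \<tau>\<in>{0..1}. \<integral>\<^sup>+ \<omega>.
              ennreal ((kop (kpow (ct n \<omega>) h) x \<tau> - kop (kpow cg h) x \<tau>)\<^sup>2) \<partial>M) \<longlonglongrightarrow> 0"
  proof (rule tendsto_sandwich[OF _ _ tendsto_const])
    show "(\<lambda>n. X * (ennreal \<alpha> * S n + ennreal \<beta> * E n)) \<longlonglongrightarrow> 0" using lim by simp
    show "\<forall>\<^sub>F n in sequentially. 0 \<le> (SUP \<tau>\<in>{0..1}. \<integral>\<^sup>+ \<omega>.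
              ennreal ((kop (kpow (ct n \<omega>) h) x \<tau> - kop (kpow cg h) x \<tau>)\<^sup>2) \<partial>M)" by simp
    show "\<forall>\<^sub>F n in sequentially. (SUP \<tau>\<in>{0..1}. \<integral>\<^sup>+ \<omega>.
              ennreal ((kop (kpow (ct n \<omega>) h) x \<tau> - kop (kpow cg h) x \<tau>)\<^sup>2) \<partial>M)
          \<le> X * (ennreal \<alpha> * S n + ennreal \<beta> * E n)"
    proof (intro always_eventually allI SUP_least)
      fix n and \<tau> :: real assume t: "\<tau> \<in> {0..1}"
      have "(\<integral>\<^sup>+ \<omega>. R1 n \<omega> \<tau> \<partial>M) \<le> S n" unfolding S_def using t by (rule SUP_upper)
      then have "X * (ennreal \<alpha> * (\<integral>\<^sup>+ \<omega>. R1 n \<omega> \<tau> \<partial>M) + ennreal \<beta> * E n) \<le> X * (ennreal \<alpha> * S n + ennreal \<beta> * E n)"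
        by (intro mult_left_mono add_mono) auto
      then show "(\<integral>\<^sup>+ \<omega>. ennreal ((kop (kpow (ct n \<omega>) h) x \<tau> - kop (kpow cg h) x \<tau>)\<^sup>2) \<partial>M)
          \<le> X * (ennreal \<alpha> * S n + ennreal \<beta> * E n)"
        using bound[OF t, of n] unfolding E_def by (rule order_trans[rotated])
    qed
  qed
qed

end
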